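(* For the $k$-server problem on the line, for every instance $I$, every prediction, and every $\lambda\in[0,1]$, there is $c>0$ depending only on the initial configuration such that $\mathrm{LambdaDC}(I)\le\alpha(k)\cdot\mathrm{FtP}(I)+c$, where $\alpha(k)=1+2\lambda+\dots+2\lambda^{(k-1)/2}$ if $k$ is odd and $\alpha(k)=1+2\lambda+\dots+2\lambda^{k/2-1}+\lambda^{k/2}$ if $k$ is even.
   Context: The $k$-server problem on the line: servers on $\mathbb{R}$ labeled $s_1\le\dots\le s_k$, requests revealed online and served by moving a server to them; cost = total distance moved. A prediction gives for each request $r_t$ an index $p_t\in\{1,\dots,k\}$; FtP serves each request by server $s_{p_t}$ (relabeling by position), $\mathrm{FtP}(I)$ being its cost. LambdaDC with parameter $\lambda$: if $r_t<s_1$ or $r_t>s_k$, move only the closest server; if $s_i<r_t<s_{i+1}$ and $p_t\le i$, move $s_i$ at speed $1$ and $s_{i+1}$ at speed $\lambda$ towards $r_t$ until one reaches it; if $p_t\ge i+1$, the speeds are swapped. *)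

theory Defs
  imports Main "HOL.Real"
begin

(* Configurations: a list of k server positions, sorted (s_1 <= ... <= s_k).
   Server indices in the paper are 1-based; list index i-1 holds s_i.
   A step of an instance is a pair (r_t, p_t): request position and predicted index. *)

(* Follow-the-Prediction: move server s_{p} (p-th by position) to r, then relabel
   by position (re-sort). *)
fun ftp_cost :: "real list \<Rightarrow> (real \<times> nat) list \<Rightarrow> real" where
  "ftp_cost s [] = 0"
| "ftp_cost s ((r, p) # rs) =
     \<bar>s ! (p - 1) - r\<bar> + ftp_cost (sort (s[p - 1 := r])) rs"

definition ldc_step :: "real \<Rightarrow> real list \<Rightarrow> real \<Rightarrow> nat \<Rightarrow> real list \<times> real" where
  "ldc_step lam s r p =
    (if r \<in> set s then (s, 0)
     else if r < hd s then (s[0 := r], hd s - r)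
     else if last s < r then (s[length s - 1 := r], r - last s)
     else
       (let j = (GREATEST j. j < length s \<and> s ! j < r);
            d1 = r - s ! j;
            d2 = s ! (j + 1) - r
        in if p \<le> j + 1 then
             (let T = (if lam * d1 \<le> d2 then d1 else d2 / lam)
              in (s[j := s ! j + T, j + 1 := s ! (j + 1) - lam * T], (1 + lam) * T))
           else
             (let T = (if lam * d2 \<le> d1 then d2 else d1 / lam)
              in (s[j := s ! j + lam * T, j + 1 := s ! (j + 1) - T], (1 + lam) * T))))"

fun ldc_cost :: "real \<Rightarrow> real list \<Rightarrow> (real \<times> nat) list \<Rightarrow> real" where
  "ldc_cost lam s [] = 0"
| "ldc_cost lam s ((r, p) # rs) =
     snd (ldc_step lam s r p) + ldc_cost lam (fst (ldc_step lam s r p)) rs"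

definition alpha_k :: "real \<Rightarrow> nat \<Rightarrow> real" where
  "alpha_k lam k =
    (if odd k then 1 + 2 * (\<Sum>j = 1..(k - 1) div 2. lam ^ j)
     else 1 + 2 * (\<Sum>j = 1..k div 2 - 1. lam ^ j) + lam ^ (k div 2))"

end

theory Submission
  imports Defs "HOL-Library.Multiset"
begin


definition uu :: "real \<Rightarrow> nat \<Rightarrow> nat \<Rightarrow> real" where
  "uu lam k s = (if 2*s < k then lam^s else if 2*s = k then lam^s/2 else 0)"
definition HH :: "real \<Rightarrow> nat \<Rightarrow> nat \<Rightarrow> real" where
  "HH lam k t = (\<Sum>s\<in>{t..k}. uu lam k s)"
definition cc :: "real \<Rightarrow> nat \<Rightarrow> nat \<Rightarrow> real" where
  "cc lam k j = 2 * HH lam k (k - j) - 2 * HH lam k (Suc j)"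
definition PP :: "real \<Rightarrow> nat \<Rightarrow> nat \<Rightarrow> real" where
  "PP lam k t = lam * HH lam k t - HH lam k (Suc t)"

lemma HH_rec: "HH lam k t = uu lam k t + HH lam k (Suc t)"
proof (cases "t \<le> k")
  case True then show ?thesis unfolding HH_def by (simp add: sum.atLeast_Suc_atMost)
next
  case False then show ?thesis unfolding HH_def uu_def by auto
qed

lemma HH_zero: "k < t \<Longrightarrow> HH lam k t = 0"
  unfolding HH_def by auto

lemma uu_nonneg: "0 \<le> lam \<Longrightarrow> 0 \<le> uu lam k s"
  unfolding uu_def by auto

lemma HH_nonneg: "0 \<le> lam \<Longrightarrow> 0 \<le> HH lam k t"
  unfolding HH_def by (auto intro: sum_nonneg uu_nonneg)

lemma HH_mono: assumes "0 \<le> lam" "t \<le> t'" shows "HH lam k t' \<le> HH lam k t"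
  using assms(2)
proof (induction t' rule: dec_induct)
  case base then show ?case by simp
next
  case (step n) then show ?case using HH_rec[of lam k n] uu_nonneg[OF assms(1), of k n] by linarith
qed

lemma PP_rec: "PP lam k t = (lam * uu lam k t - uu lam k (Suc t)) + PP lam k (Suc t)"
  unfolding PP_def using HH_rec[of lam k t] HH_rec[of lam k "Suc t"] by (simp add: algebra_simps)

lemma PP_odd:
  assumes "k = 2*m+1"
  shows "PP lam k t = (if t \<le> m then lam^(Suc m) else 0)"
proof -
  have H: "\<forall>t. k < t + n \<longrightarrow> PP lam k t = (if t \<le> m then lam^(Suc m) else 0)" for n
  proof (induction n)
    case 0 then show ?case using assms by (auto simp: PP_def HH_zero)
  next
    case (Suc n)
    show ?case
    proof (intro allI impI)
      fix t assume t: "k < t + Suc n"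
      show "PP lam k t = (if t \<le> m then lam^(Suc m) else 0)"
      proof (cases "k < t + n")
        case True then show ?thesis using Suc by auto
      next
        case False
        then have IH: "PP lam k (Suc t) = (if Suc t \<le> m then lam^(Suc m) else 0)" using Suc t by auto
        consider "Suc t \<le> m" | "t = m" | "m < t" by linarith
        then show ?thesis
        proof cases
          case 1
          then have "uu lam k t = lam^t" "uu lam k (Suc t) = lam^(Suc t)" using assms by (auto simp: uu_def)
          then show ?thesis using IH PP_rec[of lam k t] 1 by simp
        next
          case 2
          then have "uu lam k t = lam^t" "uu lam k (Suc t) = 0" using assms by (auto simp: uu_def)
          then show ?thesis using IH PP_rec[of lam k t] 2 by simp
        next
          case 3
          then have "uu lam k t = 0" "uu lam k (Suc t) = 0" using assms by (auto simp: uu_def)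
          then show ?thesis using IH PP_rec[of lam k t] 3 by simp
        qed
      qed
    qed
  qed
  show ?thesis using H[of "Suc k"] by simp
qed

lemma PP_even:
  assumes "k = 2*m" "1 \<le> m"
  shows "PP lam k t = (if t < m then lam^m/2 + lam^(Suc m)/2
           else if t = m then lam^(Suc m)/2 else 0)"
proof -
  have H: "\<forall>t. k < t + n \<longrightarrow> PP lam k t = (if t < m then lam^m/2 + lam^(Suc m)/2
           else if t = m then lam^(Suc m)/2 else 0)" for n
  proof (induction n)
    case 0 then show ?case using assms by (auto simp: PP_def HH_zero)
  next
    case (Suc n)
    show ?case
    proof (intro allI impI)
      fix t assume t: "k < t + Suc n"
      show "PP lam k t = (if t < m then lam^m/2 + lam^(Suc m)/2
           else if t = m then lam^(Suc m)/2 else 0)"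
      proof (cases "k < t + n")
        case True then show ?thesis using Suc by auto
      next
        case False
        then have IH: "PP lam k (Suc t) = (if Suc t < m then lam^m/2 + lam^(Suc m)/2
           else if Suc t = m then lam^(Suc m)/2 else 0)" using Suc t by auto
        consider "Suc t < m" | "Suc t = m" | "t = m" | "m < t" by linarith
        then show ?thesis
        proof cases
          case 1
          then have "uu lam k t = lam^t" "uu lam k (Suc t) = lam^(Suc t)" using assms by (auto simp: uu_def)
          moreover have "Suc t < m" "t < m" using 1 by auto
          ultimately show ?thesis using IH PP_rec[of lam k t] by simp
        next
          case 2
          then have "uu lam k t = lam^t" "uu lam k (Suc t) = lam^m/2" using assms by (auto simp: uu_def)
          then show ?thesis using IH PP_rec[of lam k t] 2 by auto
        next
          case 3
          then have "uu lam k t = lam^m/2" "uu lam k (Suc t) = 0" using assms by (auto simp: uu_def)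
          then show ?thesis using IH PP_rec[of lam k t] 3 assms by auto
        next
          case 4
          then have "uu lam k t = 0" "uu lam k (Suc t) = 0" using assms by (auto simp: uu_def)
          moreover have "\<not> t < m" "\<not> Suc t < m" "t \<noteq> m" "Suc t \<noteq> m" using 4 by auto
          ultimately show ?thesis using IH PP_rec[of lam k t] by simp
        qed
      qed
    qed
  qed
  show ?thesis using H[of "Suc k"] by simp
qed

lemma pw: "0 \<le> (lam::real) \<Longrightarrow> lam \<le> 1 \<Longrightarrow> n \<le> N \<Longrightarrow> lam ^ N \<le> lam ^ n"
  by (rule power_decreasing)

lemma key_odd:
  assumes "0 \<le> lam" "lam \<le> 1" "1 \<le> a" "1 \<le> b" "a + b = k" "k = 2*m+1"
  shows "PP lam k 0 + PP lam k (Suc b) \<le> PP lam k a + uu lam k b + uu lam k (Suc b)"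
proof -
  note P = PP_odd[OF assms(6), of lam]
  have u0: "0 \<le> uu lam k b" "0 \<le> uu lam k (Suc b)" using uu_nonneg assms by auto
  have m1: "1 \<le> m" using assms by auto
  consider "Suc b \<le> m" | "b = m" | "m < b" by linarith
  then show ?thesis
  proof cases
    case 1
    then have "uu lam k b = lam^b" "uu lam k (Suc b) = lam^(Suc b)" using assms by (auto simp: uu_def)
    moreover have "lam^(Suc m) \<le> lam^b" by (rule pw) (use assms 1 in auto)
    moreover have "lam^(Suc m) \<le> lam^(Suc b)" by (rule pw) (use assms 1 in auto)
    ultimately show ?thesis using P 1 assms by auto
  next
    case 2
    then have "uu lam k b = lam^m" using assms by (auto simp: uu_def)
    moreover have "lam^(Suc m) \<le> lam^m" by (rule pw) (use assms in auto)
    ultimately show ?thesis using P 2 assms u0 by auto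
  next
    case 3
    then show ?thesis using P 3 assms u0 by auto
  qed
qed

lemma key_even:
  assumes "0 \<le> lam" "lam \<le> 1" "1 \<le> a" "1 \<le> b" "a + b = k" "k = 2*m" "1 \<le> m"
  shows "PP lam k 0 + PP lam k (Suc b) \<le> PP lam k a + uu lam k b + uu lam k (Suc b)"
proof -
  note P = PP_even[OF assms(6,7), of lam]
  have u0: "0 \<le> uu lam k b" "0 \<le> uu lam k (Suc b)" using uu_nonneg assms by auto
  have P0: "PP lam k 0 = lam^m/2 + lam^(Suc m)/2" using P[of 0] assms(7) by simp
  consider "Suc b < m" | "Suc b = m" | "b = m" | "m < b" by linarith
  then show ?thesis
  proof cases
    case 1
    then have "uu lam k b = lam^b" "uu lam k (Suc b) = lam^(Suc b)" using assms by (auto simp: uu_def)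
    moreover have "lam^m \<le> lam^b" by (rule pw) (use assms 1 in auto)
    moreover have "lam^(Suc m) \<le> lam^(Suc b)" by (rule pw) (use assms 1 in auto)
    moreover have "PP lam k (Suc b) = lam^m/2 + lam^(Suc m)/2" using P 1 by simp
    moreover have "PP lam k a = 0" using P 1 assms by auto
    ultimately show ?thesis using P0 by auto
  next
    case 2
    then have "uu lam k b = lam^b" "uu lam k (Suc b) = lam^m/2" using assms by (auto simp: uu_def)
    moreover have "lam^(Suc m) \<le> lam^b" by (rule pw) (use assms 2 in auto)
    moreover have "PP lam k (Suc b) = lam^(Suc m)/2"
    proof -
      show ?thesis using P[of m] 2 by simp
    qed
    moreover have "PP lam k a = 0" using P 2 assms by auto
    ultimately show ?thesis using P0 by auto
  next
    case 3
    then have "uu lam k b = lam^m/2" "uu lam k (Suc b) = 0" using assms by (auto simp: uu_def)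
    moreover have "PP lam k (Suc b) = 0" using P 3 by simp
    moreover have "PP lam k a = lam^(Suc m)/2" using P 3 assms by auto
    ultimately show ?thesis using P0 by auto
  next
    case 4
    then have "PP lam k (Suc b) = 0" using P by simp
    moreover have "PP lam k a = lam^m/2 + lam^(Suc m)/2" using P 4 assms by auto
    ultimately show ?thesis using P0 u0 by auto
  qed
qed

lemma Gab:
  assumes "0 \<le> lam" "lam \<le> 1" "1 \<le> a" "1 \<le> b" "a + b = k"
  shows "lam + HH lam k (Suc a) - lam * HH lam k a + lam * HH lam k (Suc b) - HH lam k b
         \<le> (1 - lam) * HH lam k 1"
proof -
  have key: "PP lam k 0 + PP lam k (Suc b) \<le> PP lam k a + uu lam k b + uu lam k (Suc b)"
  proof (cases "even k")
    case True then obtain m where "k = 2*m" by auto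
    then show ?thesis using key_even[OF assms] assms by auto
  next
    case False then obtain m where "k = 2*m+1" using oddE by blast
    then show ?thesis using key_odd[OF assms] by auto
  qed
  have u0: "uu lam k 0 = 1" using assms by (auto simp: uu_def)
  have h0: "HH lam k 0 = 1 + HH lam k 1" using HH_rec[of lam k 0] u0 by simp
  have l0: "lam * HH lam k 0 = lam + lam * HH lam k 1" unfolding h0 by (simp add: algebra_simps)
  have p0: "PP lam k 0 = lam * HH lam k 0 - HH lam k 1" by (simp add: PP_def)
  have pa: "PP lam k a = lam * HH lam k a - HH lam k (Suc a)" by (simp add: PP_def)
  have pb: "PP lam k (Suc b) = lam * HH lam k (Suc b) - HH lam k (Suc (Suc b))" by (simp add: PP_def)
  have hb: "HH lam k b = uu lam k b + uu lam k (Suc b) + HH lam k (Suc (Suc b))"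
    using HH_rec[of lam k b] HH_rec[of lam k "Suc b"] by simp
  have "(1 - lam) * HH lam k 1 = HH lam k 1 - lam * HH lam k 1" by (simp add: algebra_simps)
  then show ?thesis using key l0 p0 pa pb hb by linarith
qed

lemma alpha_HH:
  assumes "1 \<le> k"
  shows "alpha_k lam k = 1 + 2 * HH lam k 1"
proof (cases "even k")
  case True then obtain m where k: "k = 2*m" by auto
  with assms have m: "1 \<le> m" by auto
  have "HH lam k 1 = (\<Sum>s\<in>{1..m}. uu lam k s)"
    unfolding HH_def by (rule sum.mono_neutral_right) (auto simp: uu_def k)
  also have "\<dots> = (\<Sum>s\<in>{1..m-1}. uu lam k s) + uu lam k m"
  proof -
    have "m = Suc (m - 1)" using m by simp
    then have "{1..m} = insert m {1..m-1}" by auto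
    moreover have "m \<notin> {1..m-1}" using m by auto
    ultimately show ?thesis by (simp add: add.commute)
  qed
  also have "(\<Sum>s\<in>{1..m-1}. uu lam k s) = (\<Sum>s\<in>{1..m-1}. lam^s)"
    by (rule sum.cong) (auto simp: uu_def k)
  also have "uu lam k m = lam^m/2" by (simp add: uu_def k)
  finally show ?thesis unfolding alpha_k_def using True k by simp
next
  case False then obtain m where k: "k = 2*m+1" using oddE by blast
  have "HH lam k 1 = (\<Sum>s\<in>{1..m}. uu lam k s)"
    unfolding HH_def by (rule sum.mono_neutral_right) (auto simp: uu_def k)
  also have "\<dots> = (\<Sum>s\<in>{1..m}. lam^s)"
    by (rule sum.cong) (auto simp: uu_def k)
  finally show ?thesis unfolding alpha_k_def using False k by simp
qed

lemma cc_props: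
  assumes "0 \<le> lam" "lam \<le> 1" "1 \<le> k"
  defines "al \<equiv> 1 + 2 * HH lam k 1"
  shows "1 \<le> al + cc lam k 0"
    and "cc lam k (k - 1) \<le> al - 1"
    and "\<And>i. Suc i < k \<Longrightarrow> (1 + lam) + cc lam k i - lam * cc lam k (Suc i) \<le> al * (1 - lam)"
    and "\<And>i. Suc i < k \<Longrightarrow> (1 + lam) - cc lam k (Suc i) + lam * cc lam k i \<le> al * (1 - lam)"
    and "\<And>j. j < k \<Longrightarrow> cc lam k (k - 1 - j) = - cc lam k j"
    and "\<And>j. j < k \<Longrightarrow> 2*j+1 \<le> k \<Longrightarrow> cc lam k j \<le> 0"
    and "0 \<le> al"
proof -
  show "1 \<le> al + cc lam k 0" using HH_nonneg[OF assms(1), of k k] unfolding al_def cc_def by simp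
  show "cc lam k (k - 1) \<le> al - 1" using HH_nonneg[OF assms(1), of k k] assms(3) unfolding al_def cc_def by simp
  show "0 \<le> al" using HH_nonneg[OF assms(1), of k 1] unfolding al_def by simp
  fix i assume i: "Suc i < k"
  have k1: "k - i = Suc (k - Suc i)" "k - Suc i + Suc i = k" using i by auto
  have "lam + HH lam k (Suc (k - Suc i)) - lam * HH lam k (k - Suc i) + lam * HH lam k (Suc (Suc i)) - HH lam k (Suc i)
         \<le> (1 - lam) * HH lam k 1"
    by (rule Gab) (use assms i in auto)
  then show "(1 + lam) + cc lam k i - lam * cc lam k (Suc i) \<le> al * (1 - lam)"
    unfolding al_def cc_def k1(1) by (simp add: algebra_simps)
  have "lam + HH lam k (Suc (Suc i)) - lam * HH lam k (Suc i) + lam * HH lam k (Suc (k - Suc i)) - HH lam k (k - Suc i)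
         \<le> (1 - lam) * HH lam k 1"
    by (rule Gab) (use assms i in auto)
  then show "(1 + lam) - cc lam k (Suc i) + lam * cc lam k i \<le> al * (1 - lam)"
    unfolding al_def cc_def k1(1) by (simp add: algebra_simps)
next
  fix j assume j: "j < k"
  then show "cc lam k (k - 1 - j) = - cc lam k j" unfolding cc_def
    by (simp add: Suc_diff_Suc)
  assume "2*j+1 \<le> k"
  then show "cc lam k j \<le> 0" unfolding cc_def using HH_mono[OF assms(1), of "Suc j" "k - j" k] by auto
qed

definition Psi :: "(nat \<Rightarrow> real) \<Rightarrow> real list \<Rightarrow> real" where
  "Psi c x = (\<Sum>j<length x. c j * x ! j)"

lemma Psi_nonneg:
  assumes "sorted x" "length x = k"
    and anti: "\<And>j. j < k \<Longrightarrow> c (k - 1 - j) = - c j"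
    and sg: "\<And>j. j < k \<Longrightarrow> 2*j+1 \<le> k \<Longrightarrow> c j \<le> 0"
  shows "0 \<le> Psi c x"
proof -
  have "Psi c x = (\<Sum>j<k. c (k - Suc j) * x ! (k - Suc j))"
    unfolding Psi_def assms(2) by (rule sum.nat_diff_reindex[symmetric])
  also have "\<dots> = (\<Sum>j<k. - c j * x ! (k - Suc j))"
    by (rule sum.cong) (use anti in auto)
  finally have "2 * Psi c x = Psi c x + (\<Sum>j<k. - c j * x ! (k - Suc j))" by simp
  also have "\<dots> = (\<Sum>j<k. c j * (x ! j - x ! (k - Suc j)))"
    unfolding Psi_def assms(2) by (simp add: sum.distrib[symmetric] algebra_simps)
  also have "\<dots> \<ge> 0"
  proof (rule sum_nonneg)
    fix j assume "j \<in> {..<k}"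
    then have j: "j < k" by simp
    show "0 \<le> c j * (x ! j - x ! (k - Suc j))"
    proof (cases "2*j+1 \<le> k")
      case True
      then have "x ! j \<le> x ! (k - Suc j)" using assms(1,2) j by (intro sorted_nth_mono) auto
      then show ?thesis using sg[OF j True] by (simp add: mult_nonpos_nonpos)
    next
      case False
      have j2: "k - Suc j < k" "2 * (k - Suc j) + 1 \<le> k" using False j by auto
      have "c (k - 1 - (k - Suc j)) = - c (k - Suc j)" using anti[OF j2(1)] .
      moreover have "k - 1 - (k - Suc j) = j" using j by auto
      ultimately have "c j \<ge> 0" using sg[OF j2] by simp
      moreover have "x ! (k - Suc j) \<le> x ! j" using assms(1,2) j False by (intro sorted_nth_mono) auto
      ultimately show ?thesis by simp
    qed
  qed
  finally show ?thesis by simp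
qed



lemma sorted_ge_hd: "sorted (xs::real list) \<Longrightarrow> xs \<noteq> [] \<Longrightarrow> v \<in> set xs \<Longrightarrow> hd xs \<le> v"
  by (cases xs) auto

lemma sum_list_upd_real:
  assumes "p < length (y::real list)"
  shows "sum_list (y[p := r]) = sum_list y - y!p + r"
proof -
  have u: "y[p := r] = take p y @ r # drop (Suc p) y" using assms by (rule upd_conv_take_nth_drop)
  have i: "y = take p y @ y!p # drop (Suc p) y" using assms by (rule id_take_nth_drop)
  have e1: "sum_list (y[p := r]) = sum_list (take p y) + r + sum_list (drop (Suc p) y)"
    unfolding u by simp
  have e2: "sum_list y = sum_list (take p y @ y!p # drop (Suc p) y)" using arg_cong[where f=sum_list, OF i] .
  have e3: "sum_list (take p y @ y!p # drop (Suc p) y) = sum_list (take p y) + y!p + sum_list (drop (Suc p) y)"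
    by simp
  show ?thesis using e1 e2 e3 by simp
qed

lemma sum_sort_upd:
  assumes "p < length (y::real list)"
  shows "(\<Sum>j<length y. sort (y[p := r]) ! j) = (\<Sum>j<length y. y ! j) - y!p + r"
proof -
  have "(\<Sum>j<length y. sort (y[p := r]) ! j) = sum_list (sort (y[p := r]))"
    by (simp add: sum_list_sum_nth atLeast0LessThan)
  also have "\<dots> = sum_list (y[p := r])"
    by (metis mset_sort sum_mset_sum_list)
  also have "\<dots> = sum_list y - y!p + r" using assms by (rule sum_list_upd_real)
  also have "sum_list y = (\<Sum>j<length y. y ! j)" by (simp add: sum_list_sum_nth atLeast0LessThan)
  finally show ?thesis .
qed

lemma ftp_right:
  fixes y :: "real list"
  assumes sy: "sorted y" and p: "p < length y" and yp: "y!p \<le> r"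
  defines "y' \<equiv> sort (y[p := r])"
  shows "\<forall>j<length y. y!j \<le> y'!j"
    and "\<forall>j<length y. r < y'!j \<longrightarrow> y'!j = y!j"
    and "\<forall>j<length y. j \<le> p \<longrightarrow> y'!j \<le> r"
    and "\<forall>i. p \<le> i \<longrightarrow> i < length y \<longrightarrow> y'!i < r \<longrightarrow>
           r - y'!i \<le> (\<Sum>j\<in>{Suc i..<length y}. y'!j - y!j)"
proof -
  define A where "A = take p y"
  define B where "B = drop (Suc p) y"
  define B1 where "B1 = takeWhile (\<lambda>v. v < r) B"
  define B2 where "B2 = dropWhile (\<lambda>v. v < r) B"
  define n where "n = length B1"
  define q where "q = p + n"
  have yA: "y = A @ y!p # B" unfolding A_def B_def using p by (rule id_take_nth_drop)
  have s0: "sorted (A @ y!p # B)" using sy by (simp only: yA[symmetric])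
  then have s0': "sorted A \<and> sorted (y!p # B) \<and> (\<forall>x\<in>set A. \<forall>z\<in>set (y!p # B). x \<le> z)"
    using sorted_append[of A "y!p # B"] by blast
  then have sA: "sorted A" and sB: "sorted B" and Ale: "\<forall>a\<in>set A. a \<le> y!p" and Bge: "\<forall>b\<in>set B. y!p \<le> b"
    by auto
  have B12: "B = B1 @ B2" unfolding B1_def B2_def by simp
  have B1lt: "\<forall>v\<in>set B1. v < r" unfolding B1_def by (auto dest: set_takeWhileD)
  have sB2: "sorted B2" unfolding B2_def using sB by (rule sorted_dropWhile)
  have B2ge: "\<forall>v\<in>set B2. r \<le> v"
  proof
    fix v assume v: "v \<in> set B2"
    then have ne: "B2 \<noteq> []" by auto
    have "\<not> hd B2 < r" unfolding B2_def by (rule hd_dropWhile) (use ne B2_def in auto)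
    moreover have "hd B2 \<le> v" using sorted_ge_hd[OF sB2 ne v] .
    ultimately show "r \<le> v" by simp
  qed
  have sB1: "sorted B1" unfolding B1_def using sB by (rule sorted_takeWhile)
  have B1B: "\<forall>v\<in>set B1. y!p \<le> v" "\<forall>v\<in>set B2. y!p \<le> v" using Bge B12 by auto
  have s1: "sorted (r # B2)" using sB2 B2ge by simp
  have s2: "sorted (B1 @ r # B2)" unfolding sorted_append
  proof (intro conjI sB1 s1 ballI)
    fix x z assume "x \<in> set B1" "z \<in> set (r # B2)"
    then have "x < r" "r \<le> z" using B1lt B2ge by auto
    then show "x \<le> z" by simp
  qed
  have srt: "sorted (A @ B1 @ r # B2)" unfolding sorted_append[of A]
  proof (intro conjI sA s2 ballI)
    fix x z assume x: "x \<in> set A" and z: "z \<in> set (B1 @ r # B2)"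
    have "y!p \<le> z" using z B1B yp by auto
    then show "x \<le> z" using Ale x by force
  qed
  have upd: "y[p := r] = A @ r # B" unfolding A_def B_def using p by (rule upd_conv_take_nth_drop)
  have ms: "mset (A @ B1 @ r # B2) = mset (y[p := r])" unfolding upd B12 by simp
  have y'eq: "y' = A @ B1 @ r # B2" unfolding y'_def by (rule properties_for_sort[OF ms srt])
  have lA: "length A = p" unfolding A_def using p by simp
  have lB: "length B = length y - Suc p" unfolding B_def by simp
  have nB: "n + length B2 = length B" unfolding n_def B12 by simp
  have qlt: "q < length y" unfolding q_def using nB lB p by linarith
  have nth1: "y'!j = y!j" if "j < p" for j
  proof -
    have "y'!j = A!j" using that by (simp add: y'eq nth_append lA)
    also have "A!j = y!j" using that by (simp add: A_def)
    finally show ?thesis .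
  qed
  have nth2: "y'!j = y!(Suc j) \<and> y!(Suc j) < r" if "p \<le> j" "j < q" for j
  proof -
    have jn: "j - p < n" using that q_def by simp
    have "y'!j = B1!(j-p)" unfolding y'eq using that jn by (simp add: nth_append lA n_def)
    moreover have "B1!(j-p) = B!(j-p)" unfolding B1_def by (rule takeWhile_nth) (use jn n_def B1_def in simp)
    moreover have "B!(j-p) = y!(Suc j)" unfolding B_def using that qlt by simp
    moreover have "B1!(j-p) \<in> set B1" using jn n_def by simp
    ultimately show ?thesis using B1lt by auto
  qed
  have nth3: "y'!q = r" unfolding y'eq q_def by (simp add: nth_append lA n_def)
  have nth4: "y'!j = y!j \<and> r \<le> y!j" if "q < j" "j < length y" for j
  proof -
    have jn: "j - Suc q < length B2" using that nB lB q_def by simp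
    have "y'!j = (B1 @ r # B2)!(j-p)" using that by (simp add: y'eq nth_append lA q_def)
    also have "\<dots> = (r # B2)!(j-p-n)"
    proof -
      have "\<not> j - p < length B1" using that n_def q_def by simp
      then show ?thesis unfolding nth_append n_def by simp
    qed
    also have "j - p - n = Suc (j - Suc q)" using that q_def by simp
    finally have "y'!j = B2!(j - Suc q)" by simp
    moreover have "B2!(j - Suc q) = B!(j - Suc q + n)" unfolding B2_def n_def B1_def
      by (rule dropWhile_nth) (use jn B2_def in simp)
    moreover have "B!(j - Suc q + n) = y!j" unfolding B_def using that q_def by simp
    moreover have "B2!(j - Suc q) \<in> set B2" using jn by simp
    ultimately show ?thesis using B2ge by auto
  qed
  have mono: "y!a \<le> y!b" if "a \<le> b" "b < length y" for a b using sy that by (rule sorted_nth_mono)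
  show "\<forall>j<length y. y!j \<le> y'!j"
  proof (intro allI impI)
    fix j assume j: "j < length y"
    consider "j < p" | "p \<le> j" "j < q" | "j = q" | "q < j" by linarith
    then show "y!j \<le> y'!j"
    proof cases
      case 1 then show ?thesis using nth1 by simp
    next
      case 2 then show ?thesis using nth2[OF 2] mono[of j "Suc j"] j qlt by auto
    next
      case 3
      show ?thesis
      proof (cases "q = p")
        case True then show ?thesis using 3 nth3 yp by simp
      next
        case False
        then have "p \<le> q - 1" "q - 1 < q" "Suc (q - 1) = q" using q_def by auto
        then show ?thesis using nth2[of "q - 1"] 3 nth3 by auto
      qed
    next
      case 4 then show ?thesis using nth4 j by simp
    qed
  qed
  show "\<forall>j<length y. r < y'!j \<longrightarrow> y'!j = y!j"
  proof (intro allI impI)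
    fix j assume j: "j < length y" and r: "r < y'!j"
    consider "j < p" | "p \<le> j" "j < q" | "j = q" | "q < j" by linarith
    then show "y'!j = y!j"
    proof cases
      case 1 then show ?thesis using nth1 by simp
    next
      case 2 then show ?thesis using nth2[OF 2] r by auto
    next
      case 3 then show ?thesis using nth3 r by simp
    next
      case 4 then show ?thesis using nth4 j by simp
    qed
  qed
  show "\<forall>j<length y. j \<le> p \<longrightarrow> y'!j \<le> r"
  proof (intro allI impI)
    fix j assume j: "j < length y" and jp: "j \<le> p"
    consider "j < p" | "j = p" "p < q" | "j = p" "p = q" using q_def jp by linarith
    then show "y'!j \<le> r"
    proof cases
      case 1 then show ?thesis using nth1 mono[of j p] p yp by auto
    next
      case 2 then show ?thesis using nth2[of p] by auto
    next
      case 3 then show ?thesis using nth3 by simp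
    qed
  qed
  show "\<forall>i. p \<le> i \<longrightarrow> i < length y \<longrightarrow> y'!i < r \<longrightarrow>
           r - y'!i \<le> (\<Sum>j\<in>{Suc i..<length y}. y'!j - y!j)"
  proof (intro allI impI)
    fix i assume pi: "p \<le> i" and il: "i < length y" and yi: "y'!i < r"
    have iq: "i < q"
    proof (rule ccontr)
      assume "\<not> i < q"
      then consider "i = q" | "q < i" by linarith
      then show False using nth3 nth4[of i] il yi by cases auto
    qed
    have nonneg: "0 \<le> y'!j - y!j" if "j < length y" for j
    proof -
      consider "j < p" | "p \<le> j" "j < q" | "j = q" | "q < j" by linarith
      then show ?thesis
      proof cases
        case 1 then show ?thesis using nth1 by simp
      next
        case 2 then show ?thesis using nth2[OF 2] mono[of j "Suc j"] that qlt by auto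
      next
        case 3
        show ?thesis
        proof (cases "q = p")
          case True then show ?thesis using 3 nth3 yp by simp
        next
          case False
          then have "p \<le> q - 1" "q - 1 < q" "Suc (q - 1) = q" using q_def by auto
          then show ?thesis using nth2[of "q - 1"] 3 nth3 by auto
        qed
      next
        case 4 then show ?thesis using nth4 that by simp
      qed
    qed
    have "(\<Sum>j\<in>{Suc i..<Suc q}. y'!j - y!j) \<le> (\<Sum>j\<in>{Suc i..<length y}. y'!j - y!j)"
      by (rule sum_mono2) (use qlt nonneg in auto)
    moreover have "(\<Sum>j\<in>{Suc i..<Suc q}. y'!j - y!j) = (\<Sum>j\<in>{Suc i..<q}. y'!j - y!j) + (y'!q - y!q)"
      using iq by (simp add: sum.atLeastLessThan_Suc)
    moreover have "(\<Sum>j\<in>{Suc i..<q}. y'!j - y!j) = (\<Sum>j\<in>{Suc i..<q}. y!(Suc j) - y!j)"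
      by (rule sum.cong) (use nth2 pi in auto)
    moreover have "(\<Sum>j\<in>{Suc i..<q}. y!(Suc j) - y!j) = y!q - y!(Suc i)"
      using iq by (intro sum_Suc_diff') simp
    moreover have "y'!i = y!(Suc i)" using nth2[OF pi iq] by simp
    ultimately show "r - y'!i \<le> (\<Sum>j\<in>{Suc i..<length y}. y'!j - y!j)" using nth3 by simp
  qed
qed

lemma ftp_left:
  fixes y :: "real list"
  assumes sy: "sorted y" and p: "p < length y" and yp: "r \<le> y!p"
  defines "y' \<equiv> sort (y[p := r])"
  shows "\<forall>j<length y. y'!j \<le> y!j"
    and "\<forall>j<length y. y'!j < r \<longrightarrow> y'!j = y!j"
    and "\<forall>j<length y. p \<le> j \<longrightarrow> r \<le> y'!j"
    and "\<forall>i. Suc i \<le> p \<longrightarrow> Suc i < length y \<longrightarrow> r < y'!(Suc i) \<longrightarrow>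
           y'!(Suc i) - r \<le> (\<Sum>j<Suc i. y!j - y'!j)"
proof -
  define A where "A = take p y"
  define B where "B = drop (Suc p) y"
  define A1 where "A1 = takeWhile (\<lambda>v. v \<le> r) A"
  define A2 where "A2 = dropWhile (\<lambda>v. v \<le> r) A"
  define q where "q = length A1"
  have yA: "y = A @ y!p # B" unfolding A_def B_def using p by (rule id_take_nth_drop)
  have s0: "sorted (A @ y!p # B)" using sy by (simp only: yA[symmetric])
  then have s0': "sorted A \<and> sorted (y!p # B) \<and> (\<forall>x\<in>set A. \<forall>z\<in>set (y!p # B). x \<le> z)"
    using sorted_append[of A "y!p # B"] by blast
  then have sA: "sorted A" and sB: "sorted B" and Ale: "\<forall>a\<in>set A. a \<le> y!p" and Bge: "\<forall>b\<in>set B. y!p \<le> b"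
    by auto
  have A12: "A = A1 @ A2" unfolding A1_def A2_def by simp
  have A1le: "\<forall>v\<in>set A1. v \<le> r" unfolding A1_def by (auto dest: set_takeWhileD)
  have sA2: "sorted A2" unfolding A2_def using sA by (rule sorted_dropWhile)
  have sA1: "sorted A1" unfolding A1_def using sA by (rule sorted_takeWhile)
  have A2gt: "\<forall>v\<in>set A2. r < v"
  proof
    fix v assume v: "v \<in> set A2"
    then have ne: "A2 \<noteq> []" by auto
    have "\<not> hd A2 \<le> r" unfolding A2_def by (rule hd_dropWhile) (use ne A2_def in auto)
    moreover have "hd A2 \<le> v" using sorted_ge_hd[OF sA2 ne v] .
    ultimately show "r < v" by simp
  qed
  have A2le: "\<forall>v\<in>set A2. v \<le> y!p" using Ale A12 by auto
  have s1: "sorted (A2 @ B)" unfolding sorted_append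
  proof (intro conjI sA2 sB ballI)
    fix x z assume "x \<in> set A2" "z \<in> set B"
    then show "x \<le> z" using A2le Bge by force
  qed
  have s2: "sorted (r # A2 @ B)"
  proof -
    have "\<forall>z\<in>set (A2 @ B). r \<le> z"
    proof
      fix z assume "z \<in> set (A2 @ B)"
      then show "r \<le> z" using A2gt Bge yp by force
    qed
    then show ?thesis using s1 by simp
  qed
  have srt: "sorted (A1 @ r # A2 @ B)" unfolding sorted_append[of A1]
  proof (intro conjI sA1 s2 ballI)
    fix x z assume x: "x \<in> set A1" and z: "z \<in> set (r # A2 @ B)"
    have "r \<le> z" using z A2gt Bge yp by force
    then show "x \<le> z" using A1le x by force
  qed
  have upd: "y[p := r] = A @ r # B" unfolding A_def B_def using p by (rule upd_conv_take_nth_drop)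
  have ms: "mset (A1 @ r # A2 @ B) = mset (y[p := r])" unfolding upd A12 by simp
  have y'eq: "y' = A1 @ r # A2 @ B" unfolding y'_def by (rule properties_for_sort[OF ms srt])
  have lA: "length A = p" unfolding A_def using p by simp
  have lA12: "q + length A2 = p" unfolding q_def using lA A12 by simp
  have nth1: "y'!j = y!j \<and> y!j \<le> r" if "j < q" for j
  proof -
    have "y'!j = A1!j" using that by (simp add: y'eq nth_append q_def)
    moreover have "A1!j = A!j" unfolding A1_def by (rule takeWhile_nth) (use that q_def A1_def in simp)
    moreover have "A!j = y!j" using that lA12 by (simp add: A_def)
    moreover have "A1!j \<in> set A1" using that q_def by simp
    ultimately show ?thesis using A1le by auto
  qed
  have nth3: "y'!q = r" unfolding y'eq q_def by (simp add: nth_append)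
  have nth2: "y'!j = y!(j - 1) \<and> r < y!(j - 1)" if "q < j" "j \<le> p" for j
  proof -
    have jn: "j - Suc q < length A2" using that lA12 by simp
    have "y'!j = (r # A2 @ B)!(j - q)"
    proof -
      have "\<not> j < length A1" using that q_def by simp
      then show ?thesis unfolding y'eq nth_append q_def by simp
    qed
    also have "j - q = Suc (j - Suc q)" using that by simp
    also have "(r # A2 @ B)!(Suc (j - Suc q)) = A2!(j - Suc q)" using jn by (simp add: nth_append)
    finally have e1: "y'!j = A2!(j - Suc q)" .
    have "A2!(j - Suc q) = A!(j - Suc q + length A1)" unfolding A2_def A1_def
      by (rule dropWhile_nth) (use jn A2_def in simp)
    also have "j - Suc q + length A1 = j - 1" using that q_def by simp
    also have "A!(j - 1) = y!(j - 1)" using that lA12 by (simp add: A_def)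
    finally have e2: "A2!(j - Suc q) = y!(j - 1)" .
    have "A2!(j - Suc q) \<in> set A2" using jn by simp
    then show ?thesis using e1 e2 A2gt by auto
  qed
  have nth4: "y'!j = y!j" if "p < j" "j < length y" for j
  proof -
    have "y'!j = (r # A2 @ B)!(j - q)"
    proof -
      have "\<not> j < length A1" using that q_def lA12 by simp
      then show ?thesis unfolding y'eq nth_append q_def by simp
    qed
    also have "j - q = Suc (j - Suc q)" using that lA12 by simp
    also have "(r # A2 @ B)!(Suc (j - Suc q)) = B!(j - Suc p)"
    proof -
      have "\<not> j - Suc q < length A2" using that lA12 by simp
      moreover have "j - Suc q - length A2 = j - Suc p" using that lA12 by simp
      ultimately show ?thesis by (simp add: nth_append)
    qed
    also have "B!(j - Suc p) = y!j" unfolding B_def using that by simp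
    finally show ?thesis .
  qed
  have mono: "y!a \<le> y!b" if "a \<le> b" "b < length y" for a b using sy that by (rule sorted_nth_mono)
  have qp: "q \<le> p" using lA12 by simp
  have down: "y'!j \<le> y!j" if j: "j < length y" for j
  proof -
    consider "j < q" | "j = q" | "q < j" "j \<le> p" | "p < j" by linarith
    then show ?thesis
    proof cases
      case 1 then show ?thesis using nth1 by simp
    next
      case 2
      show ?thesis
      proof (cases "q = p")
        case True then show ?thesis using 2 nth3 yp by simp
      next
        case False
        then have "q < Suc q" "Suc q \<le> p" "Suc q - 1 = q" using qp by auto
        then show ?thesis using nth2[of "Suc q"] 2 nth3 by auto
      qed
    next
      case 3 then show ?thesis using nth2[OF 3] mono[of "j - 1" j] j by auto
    next
      case 4 then show ?thesis using nth4 j by simp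
    qed
  qed
  show "\<forall>j<length y. y'!j \<le> y!j" using down by blast
  show "\<forall>j<length y. y'!j < r \<longrightarrow> y'!j = y!j"
  proof (intro allI impI)
    fix j assume j: "j < length y" and r: "y'!j < r"
    consider "j < q" | "j = q" | "q < j" "j \<le> p" | "p < j" by linarith
    then show "y'!j = y!j"
    proof cases
      case 1 then show ?thesis using nth1 by simp
    next
      case 2 then show ?thesis using nth3 r by simp
    next
      case 3 then show ?thesis using nth2[OF 3] r by auto
    next
      case 4 then show ?thesis using nth4 j by simp
    qed
  qed
  show "\<forall>j<length y. p \<le> j \<longrightarrow> r \<le> y'!j"
  proof (intro allI impI)
    fix j assume j: "j < length y" and jp: "p \<le> j"
    consider "j = p" "q < p" | "j = p" "q = p" | "p < j" using qp jp by linarith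
    then show "r \<le> y'!j"
    proof cases
      case 1 then show ?thesis using nth2[of p] by auto
    next
      case 2 then show ?thesis using nth3 by simp
    next
      case 3 then show ?thesis using nth4[OF 3 j] mono[of p j] j yp by auto
    qed
  qed
  show "\<forall>i. Suc i \<le> p \<longrightarrow> Suc i < length y \<longrightarrow> r < y'!(Suc i) \<longrightarrow>
           y'!(Suc i) - r \<le> (\<Sum>j<Suc i. y!j - y'!j)"
  proof (intro allI impI)
    fix i assume pi: "Suc i \<le> p" and il: "Suc i < length y" and yi: "r < y'!(Suc i)"
    have iq: "q \<le> i"
    proof (rule ccontr)
      assume "\<not> q \<le> i"
      then consider "Suc i < q" | "Suc i = q" by linarith
      then show False using nth3 nth1[of "Suc i"] yi by cases auto
    qed
    have "(\<Sum>j\<in>{q..<Suc i}. y!j - y'!j) \<le> (\<Sum>j\<in>{..<Suc i}. y!j - y'!j)"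
      by (rule sum_mono2) (use down il in auto)
    moreover have "(\<Sum>j\<in>{q..<Suc i}. y!j - y'!j) = (y!q - y'!q) + (\<Sum>j\<in>{Suc q..<Suc i}. y!j - y'!j)"
      by (rule sum.atLeast_Suc_lessThan) (use iq in simp)
    moreover have "(\<Sum>j\<in>{Suc q..<Suc i}. y!j - y'!j) = (\<Sum>j\<in>{q..<i}. y!(Suc j) - y'!(Suc j))"
      by (rule sum.shift_bounds_Suc_ivl)
    moreover have "(\<Sum>j\<in>{q..<i}. y!(Suc j) - y'!(Suc j)) = (\<Sum>j\<in>{q..<i}. y!(Suc j) - y!j)"
      by (rule sum.cong) (use nth2 pi in auto)
    moreover have "(\<Sum>j\<in>{q..<i}. y!(Suc j) - y!j) = y!i - y!q"
      using iq by (intro sum_Suc_diff') simp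
    moreover have "y'!(Suc i) = y!i" using nth2[of "Suc i"] iq pi by simp
    ultimately show "y'!(Suc i) - r \<le> (\<Sum>j<Suc i. y!j - y'!j)" using nth3 by simp
  qed
qed



lemma tri: "\<bar>(a::real) - b'\<bar> - \<bar>a - b\<bar> - \<bar>b' - b\<bar> \<le> 0"
  by linarith

lemma tri2: "\<bar>(a'::real) - b'\<bar> - \<bar>a - b\<bar> - \<bar>b' - b\<bar> \<le> \<bar>a' - a\<bar>"
  by linarith

lemma split3:
  fixes G :: "nat \<Rightarrow> real"
  assumes "Suc i \<le> k"
  shows "sum G {..<k} = sum G {..<i} + G i + sum G {Suc i..<k}"
proof -
  have "sum G {..<k} = sum G {0..<Suc i} + sum G {Suc i..<k}"
    using sum.atLeastLessThan_concat[of 0 "Suc i" k G] assms by (simp add: atLeast0LessThan)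
  also have "sum G {0..<Suc i} = sum G {..<i} + G i" by (simp add: atLeast0LessThan)
  finally show ?thesis .
qed

lemma between_R:
  fixes X X' Y Y' c :: "nat \<Rightarrow> real"
  assumes i: "Suc i < k"
    and xi: "X' i = X i + T" and xi1: "X' (Suc i) = X (Suc i) - lam * T"
    and xo: "\<And>j. j < k \<Longrightarrow> j \<noteq> i \<Longrightarrow> j \<noteq> Suc i \<Longrightarrow> X' j = X j"
    and T: "0 \<le> T" "X i + T \<le> r" "r \<le> X (Suc i) - lam * T"
    and lam: "0 \<le> lam" "lam \<le> 1" and al: "0 \<le> al"
    and g1: "(1 + lam) + c i - lam * c (Suc i) \<le> al * (1 - lam)"
    and rin: "\<exists>q<k. Y' q = r"
    and Y'm: "\<And>a b. a \<le> b \<Longrightarrow> b < k \<Longrightarrow> Y' a \<le> Y' b"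
    and Xm: "\<And>a b. a \<le> b \<Longrightarrow> b < k \<Longrightarrow> X a \<le> X b"
    and bad: "Y' i < r \<Longrightarrow> (\<forall>j<k. Y j \<le> Y' j) \<and> (\<forall>j<k. r < Y' j \<longrightarrow> Y' j = Y j)
                \<and> r - Y' i \<le> (\<Sum>j\<in>{Suc i..<k}. Y' j - Y j)"
  shows "(1 + lam) * T + (\<Sum>j<k. al * (\<bar>X' j - Y' j\<bar> - \<bar>X j - Y j\<bar> - \<bar>Y' j - Y j\<bar>) + c j * (X' j - X j)) \<le> 0"
proof -
  define A where "A j = \<bar>X' j - Y' j\<bar> - \<bar>X j - Y j\<bar> - \<bar>Y' j - Y j\<bar>" for j
  define G where "G j = al * A j + c j * (X' j - X j)" for j
  have rest: "G j \<le> 0" if "j < k" "j \<noteq> i" "j \<noteq> Suc i" for j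
  proof -
    have "A j \<le> 0" unfolding A_def using xo[OF that] tri by simp
    then show ?thesis unfolding G_def using xo[OF that] al by (simp add: mult_nonneg_nonpos)
  qed
  have sp: "sum G {..<k} = sum G {..<i} + G i + sum G {Suc i..<k}" using i by (intro split3) simp
  have lo: "sum G {..<i} \<le> 0" by (rule sum_nonpos) (use rest i in auto)
  show ?thesis
  proof (cases "r \<le> Y' i")
    case True
    have "A i \<le> - T" unfolding A_def xi using T True by linarith
    then have "al * A i \<le> al * (- T)" using al by (rule mult_left_mono)
    then have Gi: "G i \<le> - al * T + c i * T" unfolding G_def xi by simp
    have "A (Suc i) \<le> lam * T" unfolding A_def using tri2[of "X' (Suc i)" "Y' (Suc i)" "X (Suc i)" "Y (Suc i)"] xi1 T lam
      by (simp add: abs_of_nonneg)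
    then have "al * A (Suc i) \<le> al * (lam * T)" using al by (rule mult_left_mono)
    then have Gi1: "G (Suc i) \<le> al * lam * T - c (Suc i) * lam * T" unfolding G_def xi1
      by (simp add: algebra_simps)
    have "sum G {Suc i..<k} = G (Suc i) + sum G {Suc (Suc i)..<k}"
      by (rule sum.atLeast_Suc_lessThan) (use i in simp)
    moreover have "sum G {Suc (Suc i)..<k} \<le> 0" by (rule sum_nonpos) (use rest in auto)
    ultimately have hi: "sum G {Suc i..<k} \<le> G (Suc i)" by simp
    have "(1 + lam) * T + (-al * T + c i * T) + (al * lam * T - c (Suc i) * lam * T)
        = T * ((1 + lam) + c i - lam * c (Suc i) - al * (1 - lam))" by (simp add: algebra_simps)
    also have "\<dots> \<le> 0" using T(1) g1 by (simp add: mult_nonneg_nonpos)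
    finally have "(1 + lam) * T + sum G {..<k} \<le> 0" using sp lo hi Gi Gi1 by linarith
    then show ?thesis unfolding G_def A_def by simp
  next
    case False
    then have Yi: "Y' i < r" by simp
    from bad[OF Yi] have Yle: "\<forall>j<k. Y j \<le> Y' j" and Yeq: "\<forall>j<k. r < Y' j \<longrightarrow> Y' j = Y j"
      and D: "r - Y' i \<le> (\<Sum>j\<in>{Suc i..<k}. Y' j - Y j)" by auto
    obtain q where q: "q < k" "Y' q = r" using rin by auto
    have iq: "i < q"
    proof (rule ccontr)
      assume "\<not> i < q" then have "Y' q \<le> Y' i" using Y'm i by simp
      then show False using q Yi by simp
    qed
    have Y1: "Y' (Suc i) \<le> r" using Y'm[of "Suc i" q] iq q by simp
    have X'ge: "r \<le> X' j" if "Suc i \<le> j" "j < k" for j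
    proof (cases "j = Suc i")
      case True then show ?thesis using xi1 T by simp
    next
      case False
      then have "X' j = X j" using xo that by simp
      moreover have "X (Suc i) \<le> X j" using Xm that by simp
      ultimately show ?thesis using T lam by (smt (verit) mult_nonneg_nonneg)
    qed
    have tail: "G j \<le> (al + c j) * (X' j - X j) - 2 * al * (Y' j - Y j)" if "j \<in> {Suc i..<k}" for j
    proof -
      have j: "Suc i \<le> j" "j < k" using that by auto
      have "A j \<le> (X' j - X j) - 2 * (Y' j - Y j)"
      proof (cases "Y' j \<le> r")
        case True
        then show ?thesis unfolding A_def using X'ge[OF j] Yle j by (simp add: abs_if) linarith?
      next
        case False
        then have "Y' j = Y j" using Yeq j by simp
        moreover have "j \<noteq> Suc i" using False Y1 by auto
        ultimately show ?thesis unfolding A_def using xo[of j] j by simp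
      qed
      then have "al * A j \<le> al * ((X' j - X j) - 2 * (Y' j - Y j))" using al by (rule mult_left_mono)
      then show ?thesis unfolding G_def by (simp add: algebra_simps)
    qed
    have "sum G {Suc i..<k} \<le> (\<Sum>j\<in>{Suc i..<k}. (al + c j) * (X' j - X j) - 2 * al * (Y' j - Y j))"
      by (rule sum_mono) (rule tail)
    also have "\<dots> = (\<Sum>j\<in>{Suc i..<k}. (al + c j) * (X' j - X j)) - 2 * al * (\<Sum>j\<in>{Suc i..<k}. Y' j - Y j)"
      by (simp add: sum_subtractf sum_distrib_left[symmetric])
    also have "(\<Sum>j\<in>{Suc i..<k}. (al + c j) * (X' j - X j)) = (al + c (Suc i)) * (- lam * T)"
    proof -
      have "(\<Sum>j\<in>{Suc i..<k}. (al + c j) * (X' j - X j)) = (al + c (Suc i)) * (X' (Suc i) - X (Suc i))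
             + (\<Sum>j\<in>{Suc (Suc i)..<k}. (al + c j) * (X' j - X j))"
        by (rule sum.atLeast_Suc_lessThan) (use i in simp)
      moreover have "(\<Sum>j\<in>{Suc (Suc i)..<k}. (al + c j) * (X' j - X j)) = 0"
        by (rule sum.neutral) (use xo in auto)
      ultimately show ?thesis using xi1 by simp
    qed
    finally have hi: "sum G {Suc i..<k} \<le> (al + c (Suc i)) * (- lam * T) - 2 * al * (r - Y' i)"
      using D al by (smt (verit) mult_left_mono)
    have Ai: "A i - 2 * (r - Y' i) \<le> - T"
    proof (cases "X' i \<le> Y' i")
      case True then show ?thesis unfolding A_def using Yle i Yi xi by (simp add: abs_if) linarith?
    next
      case False then show ?thesis unfolding A_def using Yle i Yi xi T by (simp add: abs_if) linarith?
    qed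
    have "al * (A i - 2 * (r - Y' i)) \<le> al * (- T)" using Ai al by (rule mult_left_mono)
    then have Gi: "G i - 2 * al * (r - Y' i) \<le> - al * T + c i * T" unfolding G_def xi by (simp add: algebra_simps)
    have "(1 + lam) * T + (- al * T + c i * T) + (al + c (Suc i)) * (- lam * T)
        = T * ((1 + lam) + c i - lam * c (Suc i) - al * (1 - lam)) + T * (- 2 * al * lam)" by (simp add: algebra_simps)
    also have "\<dots> \<le> 0"
    proof -
      have "T * ((1 + lam) + c i - lam * c (Suc i) - al * (1 - lam)) \<le> 0"
        using T(1) g1 by (intro mult_nonneg_nonpos) auto
      moreover have "T * (- 2 * al * lam) = - 2 * (T * (al * lam))" by simp
      moreover have "0 \<le> T * (al * lam)" using T(1) al lam by simp
      ultimately show ?thesis by linarith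
    qed
    finally have "(1 + lam) * T + sum G {..<k} \<le> 0" using sp lo hi Gi by linarith
    then show ?thesis unfolding G_def A_def by simp
  qed
qed

lemma between_L:
  fixes X X' Y Y' c :: "nat \<Rightarrow> real"
  assumes i: "Suc i < k"
    and xi: "X' i = X i + lam * T" and xi1: "X' (Suc i) = X (Suc i) - T"
    and xo: "\<And>j. j < k \<Longrightarrow> j \<noteq> i \<Longrightarrow> j \<noteq> Suc i \<Longrightarrow> X' j = X j"
    and T: "0 \<le> T" "X i + lam * T \<le> r" "r \<le> X (Suc i) - T"
    and lam: "0 \<le> lam" "lam \<le> 1" and al: "0 \<le> al"
    and g2: "(1 + lam) - c (Suc i) + lam * c i \<le> al * (1 - lam)"
    and rin: "\<exists>q<k. Y' q = r"
    and Y'm: "\<And>a b. a \<le> b \<Longrightarrow> b < k \<Longrightarrow> Y' a \<le> Y' b"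
    and Xm: "\<And>a b. a \<le> b \<Longrightarrow> b < k \<Longrightarrow> X a \<le> X b"
    and bad: "r < Y' (Suc i) \<Longrightarrow> (\<forall>j<k. Y' j \<le> Y j) \<and> (\<forall>j<k. Y' j < r \<longrightarrow> Y' j = Y j)
                \<and> Y' (Suc i) - r \<le> (\<Sum>j<Suc i. Y j - Y' j)"
  shows "(1 + lam) * T + (\<Sum>j<k. al * (\<bar>X' j - Y' j\<bar> - \<bar>X j - Y j\<bar> - \<bar>Y' j - Y j\<bar>) + c j * (X' j - X j)) \<le> 0"
proof -
  define A where "A j = \<bar>X' j - Y' j\<bar> - \<bar>X j - Y j\<bar> - \<bar>Y' j - Y j\<bar>" for j
  define G where "G j = al * A j + c j * (X' j - X j)" for j
  have rest: "G j \<le> 0" if "j < k" "j \<noteq> i" "j \<noteq> Suc i" for j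
  proof -
    have "A j \<le> 0" unfolding A_def using xo[OF that] tri by simp
    then show ?thesis unfolding G_def using xo[OF that] al by (simp add: mult_nonneg_nonpos)
  qed
  have sp: "sum G {..<k} = sum G {..<Suc i} + G (Suc i) + sum G {Suc (Suc i)..<k}" using i by (intro split3) simp
  have hi: "sum G {Suc (Suc i)..<k} \<le> 0" by (rule sum_nonpos) (use rest in auto)
  have lt: "sum G {..<Suc i} = sum G {..<i} + G i" by simp
  have lo: "sum G {..<i} \<le> 0" by (rule sum_nonpos) (use rest i in auto)
  show ?thesis
  proof (cases "Y' (Suc i) \<le> r")
    case True
    have "A (Suc i) \<le> - T" unfolding A_def xi1 using T True by linarith
    then have "al * A (Suc i) \<le> al * (- T)" using al by (rule mult_left_mono)
    then have Gi1: "G (Suc i) \<le> - al * T - c (Suc i) * T" unfolding G_def xi1 by simp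
    have "A i \<le> lam * T" unfolding A_def using tri2[of "X' i" "Y' i" "X i" "Y i"] xi T lam
      by (simp add: abs_of_nonneg)
    then have "al * A i \<le> al * (lam * T)" using al by (rule mult_left_mono)
    then have Gi: "G i \<le> al * lam * T + c i * lam * T" unfolding G_def xi
      by (simp add: algebra_simps)
    have "(1 + lam) * T + (- al * T - c (Suc i) * T) + (al * lam * T + c i * lam * T)
        = T * ((1 + lam) - c (Suc i) + lam * c i - al * (1 - lam))" by (simp add: algebra_simps)
    also have "\<dots> \<le> 0" using T(1) g2 by (simp add: mult_nonneg_nonpos)
    finally have "(1 + lam) * T + sum G {..<k} \<le> 0" using sp lo hi lt Gi Gi1 by linarith
    then show ?thesis unfolding G_def A_def by simp
  next
    case False
    then have Yi: "r < Y' (Suc i)" by simp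
    from bad[OF Yi] have Yle: "\<forall>j<k. Y' j \<le> Y j" and Yeq: "\<forall>j<k. Y' j < r \<longrightarrow> Y' j = Y j"
      and D: "Y' (Suc i) - r \<le> (\<Sum>j<Suc i. Y j - Y' j)" by auto
    obtain q where q: "q < k" "Y' q = r" using rin by auto
    have iq: "q \<le> i"
    proof (rule ccontr)
      assume "\<not> q \<le> i" then have "Y' (Suc i) \<le> Y' q" using Y'm[of "Suc i" q] q by simp
      then show False using q Yi by simp
    qed
    have Y1: "r \<le> Y' i" using Y'm[of q i] iq q i by simp
    have X'le: "X' j \<le> r" if "j \<le> i" for j
    proof (cases "j = i")
      case True then show ?thesis using xi T by simp
    next
      case False
      then have "X' j = X j" using xo that i by simp
      moreover have "X j \<le> X i" using Xm that i by simp
      ultimately show ?thesis using T lam by (smt (verit) mult_nonneg_nonneg)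
    qed
    have head: "G j \<le> (c j - al) * (X' j - X j) - 2 * al * (Y j - Y' j)" if "j \<in> {..<Suc i}" for j
    proof -
      have j: "j \<le> i" "j < k" using that i by auto
      have "A j \<le> (X j - X' j) - 2 * (Y j - Y' j)"
      proof (cases "r \<le> Y' j")
        case True
        then show ?thesis unfolding A_def using X'le[OF j(1)] Yle j by (simp add: abs_if) linarith?
      next
        case False
        then have "Y' j = Y j" using Yeq j by simp
        moreover have "j \<noteq> i" using False Y1 by auto
        ultimately show ?thesis unfolding A_def using xo[of j] j by simp
      qed
      then have "al * A j \<le> al * ((X j - X' j) - 2 * (Y j - Y' j))" using al by (rule mult_left_mono)
      then show ?thesis unfolding G_def by (simp add: algebra_simps)
    qed
    have "sum G {..<Suc i} \<le> (\<Sum>j<Suc i. (c j - al) * (X' j - X j) - 2 * al * (Y j - Y' j))"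
      by (rule sum_mono) (rule head)
    also have "\<dots> = (\<Sum>j<Suc i. (c j - al) * (X' j - X j)) - 2 * al * (\<Sum>j<Suc i. Y j - Y' j)"
      by (simp add: sum_subtractf sum_distrib_left[symmetric])
    also have "(\<Sum>j<Suc i. (c j - al) * (X' j - X j)) = (c i - al) * (lam * T)"
    proof -
      have "(\<Sum>j<i. (c j - al) * (X' j - X j)) = 0"
        by (rule sum.neutral) (use xo i in auto)
      then show ?thesis using xi by simp
    qed
    finally have lo2: "sum G {..<Suc i} \<le> (c i - al) * (lam * T) - 2 * al * (Y' (Suc i) - r)"
      using D al by (smt (verit) mult_left_mono)
    have Ai: "A (Suc i) - 2 * (Y' (Suc i) - r) \<le> - T"
    proof (cases "Y' (Suc i) \<le> X' (Suc i)")
      case True then show ?thesis unfolding A_def using Yle i Yi xi1 by (simp add: abs_if) linarith?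
    next
      case False then show ?thesis unfolding A_def using Yle i Yi xi1 T by (simp add: abs_if) linarith?
    qed
    have "al * (A (Suc i) - 2 * (Y' (Suc i) - r)) \<le> al * (- T)" using Ai al by (rule mult_left_mono)
    then have Gi: "G (Suc i) - 2 * al * (Y' (Suc i) - r) \<le> - al * T - c (Suc i) * T"
      unfolding G_def xi1 by (simp add: algebra_simps)
    have "(1 + lam) * T + ((c i - al) * (lam * T)) + (- al * T - c (Suc i) * T)
        = T * ((1 + lam) - c (Suc i) + lam * c i - al * (1 - lam)) + T * (- 2 * al * lam)" by (simp add: algebra_simps)
    also have "\<dots> \<le> 0"
    proof -
      have "T * ((1 + lam) - c (Suc i) + lam * c i - al * (1 - lam)) \<le> 0"
        using T(1) g2 by (intro mult_nonneg_nonpos) auto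
      moreover have "T * (- 2 * al * lam) = - 2 * (T * (al * lam))" by simp
      moreover have "0 \<le> T * (al * lam)" using T(1) al lam by simp
      ultimately show ?thesis by linarith
    qed
    finally have "(1 + lam) * T + sum G {..<k} \<le> 0" using sp hi lo2 Gi by linarith
    then show ?thesis unfolding G_def A_def by simp
  qed
qed



lemma sorted_upd1:
  fixes x :: "real list"
  assumes "sorted x" "j < length x" "0 < j \<Longrightarrow> x!(j - 1) \<le> a" "Suc j < length x \<Longrightarrow> a \<le> x!(Suc j)"
  shows "sorted (x[j := a])"
  unfolding sorted_iff_nth_Suc
proof (intro allI impI)
  fix i assume i: "Suc i < length (x[j := a])"
  have m: "x!i \<le> x!(Suc i)" using assms(1) i by (simp add: sorted_iff_nth_Suc)
  consider "i = j" | "Suc i = j" | "i \<noteq> j" "Suc i \<noteq> j" by auto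
  then show "x[j := a] ! i \<le> x[j := a] ! Suc i"
  proof cases
    case 1 then show ?thesis using assms i by simp
  next
    case 2 then show ?thesis using assms i by auto
  next
    case 3 then show ?thesis using m i by simp
  qed
qed

lemma sorted_upd2:
  fixes x :: "real list"
  assumes "sorted x" "Suc j < length x" "x!j \<le> a" "a \<le> b" "b \<le> x!(Suc j)"
  shows "sorted (x[j := a, Suc j := b])"
  unfolding sorted_iff_nth_Suc
proof (intro allI impI)
  fix i assume i: "Suc i < length (x[j := a, Suc j := b])"
  have m: "\<And>u. Suc u < length x \<Longrightarrow> x!u \<le> x!(Suc u)" using assms(1) by (simp add: sorted_iff_nth_Suc)
  consider "i = j" | "Suc i = j" | "i = Suc j" | "i \<noteq> j" "Suc i \<noteq> j" "i \<noteq> Suc j" by auto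
  then show "x[j := a, Suc j := b] ! i \<le> x[j := a, Suc j := b] ! Suc i"
  proof cases
    case 1 then show ?thesis using assms i by simp
  next
    case 2 then show ?thesis using assms i m[of i] by auto
  next
    case 3 then show ?thesis using assms i m[of "Suc j"] by auto
  next
    case 4 then show ?thesis using m i by simp
  qed
qed

lemma greatest_facts:
  fixes x :: "real list"
  assumes sx: "sorted x" and ne: "x \<noteq> []" and rn: "r \<notin> set x" and h: "\<not> r < hd x" and l: "\<not> last x < r"
  defines "j \<equiv> (GREATEST j. j < length x \<and> x ! j < r)"
  shows "Suc j < length x" "x!j < r" "r < x!(Suc j)"
proof -
  have h0: "x!0 < r" using h rn ne by (metis hd_conv_nth hd_in_set linorder_neqE_linordered_idom)
  have P: "j < length x \<and> x ! j < r" unfolding j_def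
    by (rule GreatestI_nat[of _ 0 "length x"]) (use h0 ne in auto)
  have G: "\<And>m. m < length x \<Longrightarrow> x!m < r \<Longrightarrow> m \<le> j" unfolding j_def
    by (rule Greatest_le_nat[of _ _ "length x"]) auto
  show "x!j < r" using P by simp
  show sj: "Suc j < length x"
  proof (rule ccontr)
    assume "\<not> Suc j < length x"
    then have "j = length x - 1" using P by linarith
    then have "x!j = last x" using ne by (simp add: last_conv_nth)
    then show False using P l by simp
  qed
  have "\<not> x!(Suc j) < r" using G[of "Suc j"] sj by auto
  moreover have "x!(Suc j) \<noteq> r" using rn sj nth_mem by metis
  ultimately show "r < x!(Suc j)" by simp
qed

lemma reduce:
  fixes x x' y y' :: "real list" and c :: "nat \<Rightarrow> real"
  assumes "length x' = k" "length x = k" "(\<Sum>j<k. \<bar>y'!j - y!j\<bar>) = D"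
    and "L + (\<Sum>j<k. al * (\<bar>x'!j - y'!j\<bar> - \<bar>x!j - y!j\<bar> - \<bar>y'!j - y!j\<bar>) + c j * (x'!j - x!j)) \<le> 0"
  shows "L + (al * (\<Sum>j<k. \<bar>x'!j - y'!j\<bar>) + Psi c x') \<le> (al * (\<Sum>j<k. \<bar>x!j - y!j\<bar>) + Psi c x) + al * D"
proof -
  have "(\<Sum>j<k. al * (\<bar>x'!j - y'!j\<bar> - \<bar>x!j - y!j\<bar> - \<bar>y'!j - y!j\<bar>) + c j * (x'!j - x!j))
      = al * (\<Sum>j<k. \<bar>x'!j - y'!j\<bar>) - al * (\<Sum>j<k. \<bar>x!j - y!j\<bar>) - al * (\<Sum>j<k. \<bar>y'!j - y!j\<bar>)
        + (\<Sum>j<k. c j * x'!j) - (\<Sum>j<k. c j * x!j)"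
    by (simp add: sum.distrib sum_subtractf sum_distrib_left algebra_simps)
  then show ?thesis using assms unfolding Psi_def by simp
qed

lemma ftp_gen:
  fixes y :: "real list" and r :: real
  assumes sy: "sorted y" and p: "p < length y"
  defines "y' \<equiv> sort (y[p := r])"
  shows "length y' = length y" "sorted y'" "r \<in> set y'"
    "(\<Sum>j<length y. \<bar>y'!j - y!j\<bar>) = \<bar>y!p - r\<bar>"
proof -
  show "length y' = length y" "sorted y'" "r \<in> set y'" unfolding y'_def using p by (auto simp: set_update_memI)
  show "(\<Sum>j<length y. \<bar>y'!j - y!j\<bar>) = \<bar>y!p - r\<bar>"
  proof (cases "y!p \<le> r")
    case True
    have "(\<Sum>j<length y. \<bar>y'!j - y!j\<bar>) = (\<Sum>j<length y. y'!j - y!j)"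
      by (rule sum.cong) (use ftp_right(1)[OF sy p True] y'_def in auto)
    also have "\<dots> = (\<Sum>j<length y. y'!j) - (\<Sum>j<length y. y!j)" by (simp add: sum_subtractf)
    also have "\<dots> = r - y!p" using sum_sort_upd[OF p, of r] y'_def by simp
    finally show ?thesis using True by simp
  next
    case False
    then have F: "r \<le> y!p" by simp
    have "(\<Sum>j<length y. \<bar>y'!j - y!j\<bar>) = (\<Sum>j<length y. y!j - y'!j)"
      by (rule sum.cong) (use ftp_left(1)[OF sy p F] y'_def in auto)
    also have "\<dots> = (\<Sum>j<length y. y!j) - (\<Sum>j<length y. y'!j)" by (simp add: sum_subtractf)
    also have "\<dots> = y!p - r" using sum_sort_upd[OF p, of r] y'_def by simp
    finally show ?thesis using False by simp
  qed
qed

lemma T_facts1: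
  fixes lam d1 d2 :: real
  assumes "0 \<le> lam" "0 < d1" "0 < d2"
  defines "T \<equiv> (if lam * d1 \<le> d2 then d1 else d2 / lam)"
  shows "0 \<le> T \<and> T \<le> d1 \<and> lam * T \<le> d2"
proof (cases "lam * d1 \<le> d2")
  case True then show ?thesis unfolding T_def using assms by simp
next
  case False
  have l: "0 < lam"
  proof (rule ccontr)
    assume "\<not> 0 < lam" then have "lam = 0" using assms by simp
    then show False using False assms by simp
  qed
  have T: "T = d2 / lam" unfolding T_def using False by simp
  have "d2 / lam \<le> d1" using False l by (simp add: pos_divide_le_eq mult.commute)
  moreover have "0 \<le> d2 / lam" using l assms by simp
  moreover have "lam * (d2 / lam) = d2" using l by simp
  ultimately show ?thesis unfolding T by simp
qed

lemma step_main:
  fixes x y :: "real list" and c :: "nat \<Rightarrow> real" and r :: real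
  assumes sx: "sorted x" and sy: "sorted y" and lx: "length x = k" and ly: "length y = k"
    and p: "p0 < k" and lam: "0 \<le> lam" "lam \<le> 1" and al: "0 \<le> al"
    and e1: "1 \<le> al + c 0" and e2: "c (k - 1) \<le> al - 1"
    and g1: "\<And>i. Suc i < k \<Longrightarrow> (1 + lam) + c i - lam * c (Suc i) \<le> al * (1 - lam)"
    and g2: "\<And>i. Suc i < k \<Longrightarrow> (1 + lam) - c (Suc i) + lam * c i \<le> al * (1 - lam)"
  defines "y' \<equiv> sort (y[p0 := r])"
    and "x' \<equiv> fst (ldc_step lam x r (Suc p0))"
    and "L \<equiv> snd (ldc_step lam x r (Suc p0))"
  shows "L + (al * (\<Sum>j<k. \<bar>x'!j - y'!j\<bar>) + Psi c x') \<le> (al * (\<Sum>j<k. \<bar>x!j - y!j\<bar>) + Psi c x) + al * \<bar>y!p0 - r\<bar>"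
    and "sorted x'" and "length x' = k"
proof -
  have ne: "x \<noteq> []" using lx p by auto
  have p': "p0 < length y" using p ly by simp
  note F = ftp_gen[OF sy p', of r, folded y'_def]
  have Fy: "length y' = k" "sorted y'" "r \<in> set y'" "(\<Sum>j<k. \<bar>y'!j - y!j\<bar>) = \<bar>y!p0 - r\<bar>"
    using F ly by auto
  have rin: "\<exists>q<k. y'!q = r" using Fy(1,3) by (metis in_set_conv_nth)
  have Y'm: "\<And>a b. a \<le> b \<Longrightarrow> b < k \<Longrightarrow> y'!a \<le> y'!b" using Fy(1,2) by (metis sorted_nth_mono)
  have Xm: "\<And>a b. a \<le> b \<Longrightarrow> b < k \<Longrightarrow> x!a \<le> x!b" using sx lx by (metis sorted_nth_mono)
  define G where "G x' j = al * (\<bar>x'!j - y'!j\<bar> - \<bar>x!j - y!j\<bar> - \<bar>y'!j - y!j\<bar>) + c j * (x'!j - x!j)"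
    for x' :: "real list" and j
  have Gx: "G x j \<le> 0" for j
    unfolding G_def using tri[of "x!j" "y'!j" "y!j"] al by (simp add: mult_nonneg_nonpos)
  have main: "length x' = k \<and> sorted x' \<and> L + (\<Sum>j<k. G x' j) \<le> 0"
  proof (cases "r \<in> set x")
    case True
    then have xe: "x' = x" "L = 0" by (simp_all add: x'_def L_def ldc_step_def)
    have "(\<Sum>j<k. G x j) \<le> 0" by (rule sum_nonpos) (use Gx in auto)
    then show ?thesis using xe sx lx by simp
  next
    case rx: False
    show ?thesis
    proof (cases "r < hd x")
      case True
      then have xe: "x' = x[0 := r]" "L = hd x - r" using rx by (simp_all add: x'_def L_def ldc_step_def)
      have h0: "hd x = x!0" using ne by (simp add: hd_conv_nth)
      have k0: "0 < k" using p by simp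
      have y0: "y'!0 \<le> r" using rin Y'm by auto
      have srt: "sorted x'" unfolding xe
        by (rule sorted_upd1) (use sx k0 lx True h0 Xm[of 0 1] in auto)
      have sp: "sum (G x') {..<k} = sum (G x') {..<0} + G x' 0 + sum (G x') {Suc 0..<k}"
        using k0 by (intro split3) simp
      have rest: "sum (G x') {Suc 0..<k} \<le> 0"
      proof (rule sum_nonpos)
        fix m assume "m \<in> {Suc 0..<k}"
        then have "G x' m = G x m" unfolding G_def xe by simp
        then show "G x' m \<le> 0" using Gx by simp
      qed
      have "\<bar>r - y'!0\<bar> - \<bar>x!0 - y!0\<bar> - \<bar>y'!0 - y!0\<bar> \<le> r - x!0" using y0 by linarith
      then have "al * (\<bar>r - y'!0\<bar> - \<bar>x!0 - y!0\<bar> - \<bar>y'!0 - y!0\<bar>) \<le> al * (r - x!0)"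
        using al by (rule mult_left_mono)
      then have G0: "G x' 0 \<le> (al + c 0) * (r - x!0)" unfolding G_def xe using k0 lx
        by (simp add: algebra_simps)
      have "(x!0 - r) + (al + c 0) * (r - x!0) = (x!0 - r) * (1 - (al + c 0))" by (simp add: algebra_simps)
      also have "\<dots> \<le> 0" using True h0 e1 by (intro mult_nonneg_nonpos) auto
      finally have "L + sum (G x') {..<k} \<le> 0" using sp rest G0 xe h0 by simp
      then show ?thesis using srt xe lx by simp
    next
      case nh: False
      show ?thesis
      proof (cases "last x < r")
        case True
        then have xe: "x' = x[k - 1 := r]" "L = r - last x" using rx nh lx by (simp_all add: x'_def L_def ldc_step_def)
        have k0: "0 < k" using p by simp
        have h0: "last x = x!(k - 1)" using ne lx by (simp add: last_conv_nth)
        have y0: "r \<le> y'!(k - 1)" using rin Y'm by auto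
        have srt: "sorted x'" unfolding xe
        proof (rule sorted_upd1)
          show "sorted x" "k - 1 < length x" using sx lx k0 by auto
          show "x ! (k - 1 - 1) \<le> r" if "0 < k - 1"
          proof -
            have "x ! (k - 1 - 1) \<le> x ! (k - 1)" using Xm[of "k - 1 - 1" "k - 1"] k0 by simp
            then show ?thesis using True h0 by simp
          qed
          show "r \<le> x ! Suc (k - 1)" if "Suc (k - 1) < length x" using that lx k0 by simp
        qed
        have sp: "sum (G x') {..<k} = sum (G x') {..<k-1} + G x' (k-1) + sum (G x') {Suc (k-1)..<k}"
          using k0 by (intro split3) simp
        have rest: "sum (G x') {..<k-1} \<le> 0"
        proof (rule sum_nonpos)
          fix m assume "m \<in> {..<k-1}"
          then have "G x' m = G x m" unfolding G_def xe by simp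
          then show "G x' m \<le> 0" using Gx by simp
        qed
        have rest2: "sum (G x') {Suc (k-1)..<k} = 0" using k0 by simp
        have "\<bar>r - y'!(k-1)\<bar> - \<bar>x!(k-1) - y!(k-1)\<bar> - \<bar>y'!(k-1) - y!(k-1)\<bar> \<le> x!(k-1) - r" using y0 by linarith
        then have "al * (\<bar>r - y'!(k-1)\<bar> - \<bar>x!(k-1) - y!(k-1)\<bar> - \<bar>y'!(k-1) - y!(k-1)\<bar>) \<le> al * (x!(k-1) - r)"
          using al by (rule mult_left_mono)
        then have G0: "G x' (k-1) \<le> (c (k-1) - al) * (r - x!(k-1))" unfolding G_def xe using k0 lx
          by (simp add: algebra_simps)
        have "(r - x!(k-1)) + (c (k-1) - al) * (r - x!(k-1)) = (r - x!(k-1)) * (1 + c (k-1) - al)" by (simp add: algebra_simps)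
        also have "\<dots> \<le> 0" using True h0 e2 by (intro mult_nonneg_nonpos) auto
        finally have "L + sum (G x') {..<k} \<le> 0" using sp rest rest2 G0 xe h0 by simp
        then show ?thesis using srt xe lx by simp
      next
        case nl: False
        define j where "j = (GREATEST j. j < length x \<and> x ! j < r)"
        have gf: "Suc j < k" "x!j < r" "r < x!(Suc j)" using greatest_facts[OF sx ne rx nh nl] j_def lx by auto
        define d1 where "d1 = r - x!j"
        define d2 where "d2 = x!(Suc j) - r"
        have d: "0 < d1" "0 < d2" using gf d1_def d2_def by auto
        show ?thesis
        proof (cases "p0 \<le> j")
          case pj: True
          define T where "T = (if lam * d1 \<le> d2 then d1 else d2 / lam)"
          have Tf: "0 \<le> T" "T \<le> d1" "lam * T \<le> d2" using T_facts1[OF lam(1) d] unfolding T_def by auto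
          have c1: "(r \<in> set x) = False" "(r < hd x) = False" "(last x < r) = False" using rx nh nl by auto
          have "ldc_step lam x r (Suc p0) = (x[j := x!j + T, Suc j := x!(Suc j) - lam * T], (1 + lam) * T)"
            unfolding ldc_step_def Let_def c1 if_False j_def[symmetric] T_def d1_def d2_def
            using pj by simp
          then have xe: "x' = x[j := x!j + T, Suc j := x!(Suc j) - lam * T]" "L = (1 + lam) * T"
            unfolding x'_def L_def by simp_all
          have srt: "sorted x'" unfolding xe
            by (rule sorted_upd2) (use sx gf lx Tf d1_def d2_def lam in auto)
          have lx': "length x' = k" using xe lx by simp
          have B: "(1 + lam) * T + (\<Sum>i<k. al * (\<bar>x'!i - y'!i\<bar> - \<bar>x!i - y!i\<bar> - \<bar>y'!i - y!i\<bar>) + c i * (x'!i - x!i)) \<le> 0"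
          proof (rule between_R[where i = j and r = r])
            show "Suc j < k" using gf by simp
            show "x'!j = x!j + T" using xe gf lx by simp
            show "x'!(Suc j) = x!(Suc j) - lam * T" using xe gf lx by simp
            show "x'!m = x!m" if "m < k" "m \<noteq> j" "m \<noteq> Suc j" for m using xe that by simp
            show "0 \<le> T" "x!j + T \<le> r" "r \<le> x!(Suc j) - lam * T" using Tf d1_def d2_def by auto
            show "0 \<le> lam" "lam \<le> 1" "0 \<le> al" using lam al by auto
            show "(1 + lam) + c j - lam * c (Suc j) \<le> al * (1 - lam)" using g1 gf by simp
            show "\<exists>q<k. y'!q = r" by (rule rin)
            show "y'!a \<le> y'!b" if "a \<le> b" "b < k" for a b using Y'm that by simp
            show "x!a \<le> x!b" if "a \<le> b" "b < k" for a b using Xm that by simp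
            assume bad: "y'!j < r"
            have yp: "y!p0 \<le> r"
            proof (rule ccontr)
              assume "\<not> y!p0 \<le> r"
              then have "r \<le> y!p0" by simp
              from ftp_left(3)[OF sy p' this, folded y'_def] have "r \<le> y'!j" using pj gf ly by auto
              then show False using bad by simp
            qed
            note R = ftp_right[OF sy p' yp, folded y'_def]
            show "(\<forall>m<k. y!m \<le> y'!m) \<and> (\<forall>m<k. r < y'!m \<longrightarrow> y'!m = y!m)
                \<and> r - y'!j \<le> (\<Sum>m\<in>{Suc j..<k}. y'!m - y!m)"
              using R(1,2) R(4)[rule_format, of j] pj gf bad ly by auto
          qed
          have "(\<Sum>i<k. G x' i) = (\<Sum>i<k. al * (\<bar>x'!i - y'!i\<bar> - \<bar>x!i - y!i\<bar> - \<bar>y'!i - y!i\<bar>) + c i * (x'!i - x!i))"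
            unfolding G_def by simp
          then show ?thesis using B xe srt lx' by simp
        next
          case pj: False
          define T where "T = (if lam * d2 \<le> d1 then d2 else d1 / lam)"
          have Tf: "0 \<le> T" "T \<le> d2" "lam * T \<le> d1" using T_facts1[OF lam(1) d(2) d(1)] unfolding T_def by auto
          have c1: "(r \<in> set x) = False" "(r < hd x) = False" "(last x < r) = False" using rx nh nl by auto
          have "ldc_step lam x r (Suc p0) = (x[j := x!j + lam * T, Suc j := x!(Suc j) - T], (1 + lam) * T)"
            unfolding ldc_step_def Let_def c1 if_False j_def[symmetric] T_def d1_def d2_def
            using pj by simp
          then have xe: "x' = x[j := x!j + lam * T, Suc j := x!(Suc j) - T]" "L = (1 + lam) * T"
            unfolding x'_def L_def by simp_all
          have srt: "sorted x'" unfolding xe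
            by (rule sorted_upd2) (use sx gf lx Tf d1_def d2_def lam in auto)
          have lx': "length x' = k" using xe lx by simp
          have B: "(1 + lam) * T + (\<Sum>i<k. al * (\<bar>x'!i - y'!i\<bar> - \<bar>x!i - y!i\<bar> - \<bar>y'!i - y!i\<bar>) + c i * (x'!i - x!i)) \<le> 0"
          proof (rule between_L[where i = j and r = r])
            show "Suc j < k" using gf by simp
            show "x'!j = x!j + lam * T" using xe gf lx by simp
            show "x'!(Suc j) = x!(Suc j) - T" using xe gf lx by simp
            show "x'!m = x!m" if "m < k" "m \<noteq> j" "m \<noteq> Suc j" for m using xe that by simp
            show "0 \<le> T" "x!j + lam * T \<le> r" "r \<le> x!(Suc j) - T" using Tf d1_def d2_def by auto
            show "0 \<le> lam" "lam \<le> 1" "0 \<le> al" using lam al by auto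
            show "(1 + lam) - c (Suc j) + lam * c j \<le> al * (1 - lam)" using g2 gf by simp
            show "\<exists>q<k. y'!q = r" by (rule rin)
            show "y'!a \<le> y'!b" if "a \<le> b" "b < k" for a b using Y'm that by simp
            show "x!a \<le> x!b" if "a \<le> b" "b < k" for a b using Xm that by simp
            assume bad: "r < y'!(Suc j)"
            have yp: "r \<le> y!p0"
            proof (rule ccontr)
              assume "\<not> r \<le> y!p0"
              then have "y!p0 \<le> r" by simp
              from ftp_right(3)[OF sy p' this, folded y'_def] have "y'!(Suc j) \<le> r" using pj gf ly by auto
              then show False using bad by simp
            qed
            note R = ftp_left[OF sy p' yp, folded y'_def]
            show "(\<forall>m<k. y'!m \<le> y!m) \<and> (\<forall>m<k. y'!m < r \<longrightarrow> y'!m = y!m)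
                \<and> y'!(Suc j) - r \<le> (\<Sum>m<Suc j. y!m - y'!m)"
              using R(1,2) R(4)[rule_format, of j] pj gf bad ly by auto
          qed
          have "(\<Sum>i<k. G x' i) = (\<Sum>i<k. al * (\<bar>x'!i - y'!i\<bar> - \<bar>x!i - y!i\<bar> - \<bar>y'!i - y!i\<bar>) + c i * (x'!i - x!i))"
            unfolding G_def by simp
          then show ?thesis using B xe srt lx' by simp
        qed
      qed
    qed
  qed
  show "sorted x'" "length x' = k" using main by auto
  show "L + (al * (\<Sum>j<k. \<bar>x'!j - y'!j\<bar>) + Psi c x') \<le> (al * (\<Sum>j<k. \<bar>x!j - y!j\<bar>) + Psi c x) + al * \<bar>y!p0 - r\<bar>"
    by (rule reduce[OF _ lx Fy(4)]) (use main in \<open>auto simp: G_def\<close>)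
qed



lemma ind_main:
  fixes c :: "nat \<Rightarrow> real"
  assumes lam: "0 \<le> lam" "lam \<le> 1" and al: "0 \<le> al"
    and e1: "1 \<le> al + c 0" and e2: "c (k - 1) \<le> al - 1"
    and g1: "\<And>i. Suc i < k \<Longrightarrow> (1 + lam) + c i - lam * c (Suc i) \<le> al * (1 - lam)"
    and g2: "\<And>i. Suc i < k \<Longrightarrow> (1 + lam) - c (Suc i) + lam * c i \<le> al * (1 - lam)"
    and anti: "\<And>j. j < k \<Longrightarrow> c (k - 1 - j) = - c j"
    and sg: "\<And>j. j < k \<Longrightarrow> 2*j+1 \<le> k \<Longrightarrow> c j \<le> 0"
  shows "\<forall>x y. sorted x \<longrightarrow> sorted y \<longrightarrow> length x = k \<longrightarrow> length y = k \<longrightarrow>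
           (\<forall>z\<in>set zs. 1 \<le> snd z \<and> snd z \<le> k) \<longrightarrow>
           ldc_cost lam x zs \<le> al * ftp_cost y zs + (al * (\<Sum>j<k. \<bar>x!j - y!j\<bar>) + Psi c x)"
proof (induction zs)
  case Nil
  show ?case
  proof (intro allI impI)
    fix x y :: "real list"
    assume "sorted x" "sorted y" "length x = k" "length y = k"
    then have "0 \<le> Psi c x" using Psi_nonneg[of x k c] anti sg by auto
    moreover have "0 \<le> al * (\<Sum>j<k. \<bar>x!j - y!j\<bar>)" using al by (simp add: sum_nonneg)
    ultimately show "ldc_cost lam x [] \<le> al * ftp_cost y [] + (al * (\<Sum>j<k. \<bar>x!j - y!j\<bar>) + Psi c x)"
      by simp
  qed
next
  case (Cons z zs)
  show ?case
  proof (intro allI impI)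
    fix x y :: "real list"
    assume sx: "sorted x" and sy: "sorted y" and lx: "length x = k" and ly: "length y = k"
      and zs: "\<forall>z\<in>set (z # zs). 1 \<le> snd z \<and> snd z \<le> k"
    obtain r p where z: "z = (r, p)" by (cases z)
    have p1: "1 \<le> p" "p \<le> k" using zs z by auto
    define p0 where "p0 = p - 1"
    have pp: "p = Suc p0" "p0 < k" using p1 p0_def by auto
    define y' where "y' = sort (y[p0 := r])"
    define x' where "x' = fst (ldc_step lam x r (Suc p0))"
    define L where "L = snd (ldc_step lam x r (Suc p0))"
    note S = step_main[OF sx sy lx ly pp(2) lam al e1 e2 g1 g2, of r, folded y'_def x'_def L_def]
    have sy': "sorted y'" "length y' = k" unfolding y'_def using ly by auto
    have IH: "ldc_cost lam x' zs \<le> al * ftp_cost y' zs + (al * (\<Sum>j<k. \<bar>x'!j - y'!j\<bar>) + Psi c x')"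
      using Cons.IH S(2,3) sy' zs by auto
    have "ldc_cost lam x (z # zs) = L + ldc_cost lam x' zs"
      unfolding z pp(1) L_def x'_def by simp
    moreover have "ftp_cost y (z # zs) = \<bar>y!p0 - r\<bar> + ftp_cost y' zs"
      unfolding z y'_def p0_def by simp
    ultimately show "ldc_cost lam x (z # zs) \<le> al * ftp_cost y (z # zs) + (al * (\<Sum>j<k. \<bar>x!j - y!j\<bar>) + Psi c x)"
      using IH S(1) by (simp add: algebra_simps)
  qed
qed

theorem lemma8:
  fixes k :: nat and lam :: real and s0 :: "real list"
  assumes "1 \<le> k" and "0 \<le> lam" and "lam \<le> 1"
    and "length s0 = k" and "sorted s0"
  shows "\<exists>c > 0. \<forall>rs ps. length ps = length rs \<longrightarrow> (\<forall>p \<in> set ps. 1 \<le> p \<and> p \<le> k) \<longrightarrow>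
           ldc_cost lam s0 (zip rs ps) \<le> alpha_k lam k * ftp_cost s0 (zip rs ps) + c"
proof -
  define al where "al = 1 + 2 * HH lam k 1"
  have alk: "alpha_k lam k = al" unfolding al_def using alpha_HH[OF assms(1)] by simp
  note C = cc_props[OF assms(2,3,1), folded al_def]
  note I = ind_main[OF assms(2,3) C(7) C(1) C(2) C(3) C(4) C(5) C(6)]
  define c0 where "c0 = Psi (cc lam k) s0 + 1"
  have "0 \<le> Psi (cc lam k) s0" using Psi_nonneg[OF assms(5,4)] C(5,6) by blast
  then have c0: "0 < c0" unfolding c0_def by simp
  show ?thesis
  proof (intro exI[of _ c0] conjI c0 allI impI)
    fix rs :: "real list" and ps :: "nat list"
    assume "length ps = length rs" and ps: "\<forall>p\<in>set ps. 1 \<le> p \<and> p \<le> k"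
    have zs: "\<forall>z\<in>set (zip rs ps). 1 \<le> snd z \<and> snd z \<le> k"
      using ps by (auto dest: set_zip_rightD)
    have "ldc_cost lam s0 (zip rs ps) \<le> al * ftp_cost s0 (zip rs ps) + (al * (\<Sum>j<k. \<bar>s0!j - s0!j\<bar>) + Psi (cc lam k) s0)"
      using I[of "zip rs ps"] assms(4,5) zs by blast
    then show "ldc_cost lam s0 (zip rs ps) \<le> alpha_k lam k * ftp_cost s0 (zip rs ps) + c0"
      unfolding alk c0_def by simp
  qed
qed


end
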